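(* Let $C$ be a self-dual $[20,10,9]$ code over $\mathrm{GF}(7)$ with $A_7(C)\cong D_{20}^+$. Then there exists a skew-Hadamard matrix $H$ of order $20$ such that $C$ is generated over $\mathrm{GF}(7)$ by the row vectors of $H+2I$ (reduced modulo $7$).
   Context: An $[n,k,d]$ code over $\mathrm{GF}(p)$ is a $k$-dimensional subspace of $\mathrm{GF}(p)^n$ with minimum nonzero Hamming weight $d$; it is self-dual if $C=C^\perp$ under the standard inner product. Construction A: let $\varepsilon_1,\dots,\varepsilon_{20}$ be an orthogonal basis of $\mathbb{R}^{20}$ with $(\varepsilon_i,\varepsilon_j)=7\delta_{i,j}$, and $A_7(C)=\{\frac17\sum_{i=1}^{20} x_i\varepsilon_i\mid x\in\mathbb{Z}^{20},\ x\bmod 7\in C\}$. Lattices $L,L'$ are isomorphic if $L'=\{xA\mid x\in L\}$ for an orthogonal matrix $A$. With $e_1,\dots,e_{20}$ the standard basis of $\mathbb{R}^{20}$: $D_{20}=\{\sum\alpha_ie_i\mid\alpha\in\mathbb{Z}^{20},\ \sum\alpha_i\equiv0\pmod 2\}$, $D_{20}^+=\langle D_{20},\frac12\mathbf 1\rangle$ with $\mathbf 1$ the all-one vector. A Hadamard matrix of order $n$ is an $n\times n$ $(1,-1)$-matrix $H$ with $HH^\top=nI$; it is skew-Hadamard if moreover $H+H^\top=2I$. *)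

theory Defs
  imports "HOL-Analysis.Analysis" "Berlekamp_Zassenhaus.Finite_Field"
begin

text \<open>Codes of length n over a finite field F are subsets of F^n, here the type 'f ^ 'n
  with 'n a finite index type of cardinality n.  GF(p) is 'p mod_ring with CARD('p) = p prime.\<close>

definition code_inner :: "'f::field ^ 'n \<Rightarrow> 'f ^ 'n \<Rightarrow> 'f" where
  "code_inner x y = (\<Sum>i\<in>UNIV. x $ i * y $ i)"

definition dual_code :: "('f::field ^ 'n) set \<Rightarrow> ('f ^ 'n) set" where
  "dual_code C = {y. \<forall>x\<in>C. code_inner x y = 0}"

definition self_dual :: "('f::field ^ 'n) set \<Rightarrow> bool" where
  "self_dual C \<longleftrightarrow> C = dual_code C"

definition hamming_weight :: "'f::zero ^ 'n \<Rightarrow> nat" where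
  "hamming_weight x = card {i. x $ i \<noteq> 0}"

definition min_weight :: "('f::zero ^ 'n) set \<Rightarrow> nat" where
  "min_weight C = Min (hamming_weight ` (C - {0}))"

definition is_nkd_code :: "nat \<Rightarrow> nat \<Rightarrow> nat \<Rightarrow> ('f::field ^ 'n) set \<Rightarrow> bool" where
  "is_nkd_code n k d C \<longleftrightarrow> CARD('n) = n \<and> vec.subspace C \<and> vec.dim C = k \<and> min_weight C = d"

text \<open>Construction A with the orthogonal basis eps_i = sqrt p * e_i, (eps_i,eps_j) = p delta_ij:
  A_p(C) = { (1/p) sum x_i eps_i | x in Z^n, x mod p in C }.\<close>
definition constructionA :: "('p::prime_card mod_ring ^ 'n) set \<Rightarrow> (real ^ 'n) set" where
  "constructionA C =
     {(\<chi> i. (1 / real CARD('p)) * real_of_int (x $ i) * sqrt (real CARD('p))) | x :: int ^ 'n.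
        (\<chi> i. (of_int (x $ i) :: 'p mod_ring)) \<in> C}"

definition lattice_iso :: "(real ^ 'n) set \<Rightarrow> (real ^ 'n) set \<Rightarrow> bool" where
  "lattice_iso L L' \<longleftrightarrow> (\<exists>A :: real ^ 'n ^ 'n. orthogonal_matrix A \<and> L' = (\<lambda>x. x v* A) ` L)"

definition D_lattice :: "(real ^ 'n) set" where
  "D_lattice = {(\<chi> i. real_of_int (a $ i)) | a :: int ^ 'n. even (\<Sum>i\<in>UNIV. a $ i)}"

definition D_plus_lattice :: "(real ^ 'n) set" where
  "D_plus_lattice = {v + real_of_int k *\<^sub>R (\<chi> i. 1 / 2) | v k. v \<in> D_lattice}"

definition hadamard_matrix :: "int ^ 'n ^ 'n \<Rightarrow> bool" where
  "hadamard_matrix H \<longleftrightarrow> (\<forall>i j. H $ i $ j = 1 \<or> H $ i $ j = -1) \<and>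
     H ** transpose H = mat (int CARD('n))"

definition skew_hadamard_matrix :: "int ^ 'n ^ 'n \<Rightarrow> bool" where
  "skew_hadamard_matrix H \<longleftrightarrow> hadamard_matrix H \<and> H + transpose H = mat 2"

definition mat_mod :: "int ^ 'n ^ 'm \<Rightarrow> 'p::prime_card mod_ring ^ 'n ^ 'm" where
  "mat_mod M = (\<chi> i j. of_int (M $ i $ j))"

end

theory Submission
  imports Defs
begin

lemma orth_inner:
  fixes A :: "real^'n^'n"
  assumes "orthogonal_matrix A"
  shows "inner (x v* A) (y v* A) = inner x y"
proof -
  have "A *v (y v* A) = y"
    using assms unfolding orthogonal_matrix_def
    by (metis matrix_vector_mul_assoc matrix_vector_mul_lid transpose_matrix_vector)
  then show ?thesis by (simp add: dot_lmul_matrix)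
qed

lemma odd_sq_lemma:
  fixes g :: "'n::finite \<Rightarrow> int"
  assumes odd: "\<And>j. odd (g j)" and s: "(\<Sum>j\<in>UNIV. (g j)^2) = 28" and c: "CARD('n) = 20"
  shows "\<exists>a. \<bar>g a\<bar> = 3 \<and> (\<forall>j. j \<noteq> a \<longrightarrow> \<bar>g j\<bar> = 1)"
proof -
  define h where "h j = (g j)^2 - 1" for j
  have hs: "(\<Sum>j\<in>UNIV. h j) = 8"
    using s c by (simp add: h_def sum_subtractf)
  have h8: "8 dvd h j" for j
  proof -
    obtain t where t: "g j = 2*t+1" using odd[of j] by (metis oddE)
    have "even (t*(t+1))" by simp
    then obtain u where "t*(t+1) = 2*u" by blast
    then have "h j = 8*u" unfolding h_def t by (simp add: algebra_simps power2_eq_square)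
    then show ?thesis by simp
  qed
  have hnn: "h j \<ge> 0" for j
  proof -
    have "g j \<noteq> 0" using odd[of j] by (metis dvd_0_right)
    then have "(g j)^2 > 0" by simp
    then have "(g j)^2 \<ge> 1" by linarith
    then show ?thesis unfolding h_def by linarith
  qed
  have "\<exists>a. h a \<noteq> 0"
  proof (rule ccontr)
    assume "\<not> (\<exists>a. h a \<noteq> 0)"
    then have "\<forall>j. h j = 0" by blast
    then have "(\<Sum>j\<in>UNIV. h j) = 0" by simp
    then show False using hs by simp
  qed
  then obtain a where ha: "h a \<noteq> 0" by blast
  have "h a \<ge> 8" using h8[of a] ha hnn[of a]
  proof -
    obtain u where u: "h a = 8*u" using h8[of a] by blast
    then have "u > 0" using ha hnn[of a] by simp
    then show ?thesis using u by simp
  qed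
  have split: "(\<Sum>j\<in>UNIV. h j) = h a + (\<Sum>j\<in>UNIV - {a}. h j)"
    by (simp add: sum.remove)
  have rest_nn: "(\<Sum>j\<in>UNIV - {a}. h j) \<ge> 0" by (simp add: hnn sum_nonneg)
  have ha8: "h a = 8" using hs split rest_nn \<open>h a \<ge> 8\<close> by linarith
  have rest0: "(\<Sum>j\<in>UNIV - {a}. h j) = 0" using hs split ha8 by linarith
  have others: "h j = 0" if "j \<noteq> a" for j
    using rest0 sum_nonneg_eq_0_iff[of "UNIV - {a}" h] hnn that by auto
  have ga: "\<bar>g a\<bar> = 3"
  proof -
    have "\<bar>g a\<bar>^2 = 3^2" using ha8 unfolding h_def by simp
    then show ?thesis using power2_eq_iff_nonneg[of "\<bar>g a\<bar>" 3] by simp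
  qed
  have "\<bar>g j\<bar> = 1" if "j \<noteq> a" for j
  proof -
    have "\<bar>g j\<bar>^2 = 1^2" using others[OF that] unfolding h_def by simp
    then show ?thesis using power2_eq_iff_nonneg[of "\<bar>g j\<bar>" 1] by simp
  qed
  with ga show ?thesis by blast
qed

lemma transpose_orth:
  fixes B :: "'n::finite \<Rightarrow> 'n \<Rightarrow> real"
  assumes "\<And>k l. (\<Sum>j\<in>UNIV. B k j * B l j) = (if k = l then 28 else 0)"
  shows "(\<Sum>k\<in>UNIV. B k a * B k b) = (if a = b then 28 else 0)"
proof -
  define M :: "real^'n^'n" where "M = (\<chi> k j. B k j)"
  define M' :: "real^'n^'n" where "M' = (\<chi> j l. B l j / 28)"
  have "M ** M' = mat 1"
    unfolding M_def M'_def matrix_matrix_mult_def mat_def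
    by (simp add: vec_eq_iff sum_divide_distrib[symmetric] assms)
  then have "M' ** M = mat 1" using matrix_left_right_inverse by blast
  then have "(M' ** M) $ a $ b = mat 1 $ a $ b" by simp
  then have "(\<Sum>k\<in>UNIV. B k a * B k b) / 28 = (if a = b then 1 else 0)"
    unfolding M_def M'_def matrix_matrix_mult_def mat_def
    by (simp add: sum_divide_distrib[symmetric])
  then show ?thesis by (auto split: if_splits)
qed


lemma sum_delta_mult:
  fixes g :: "'n::finite \<Rightarrow> 'a::comm_semiring_1"
  shows "(\<Sum>j\<in>UNIV. g j * (if j = r then c else 0)) = g r * c"
proof -
  have "(\<Sum>j\<in>UNIV. g j * (if j = r then c else 0)) = (\<Sum>j\<in>UNIV. if j = r then g j * c else 0)"
    by (rule sum.cong) auto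
  then show ?thesis by simp
qed

lemma skew_arith:
  fixes \<alpha> \<beta> \<gamma> \<delta> :: int
  assumes "\<bar>\<alpha>\<bar> = 3" "\<bar>\<delta>\<bar> = 3" "\<bar>\<beta>\<bar> = 1" "\<bar>\<gamma>\<bar> = 1"
    and "\<And>s. s = 1 \<or> s = -1 \<Longrightarrow> \<not> (\<bar>\<alpha> + s*\<beta>\<bar> = 4 \<and> \<bar>\<gamma> + s*\<delta>\<bar> = 4)"
  shows "sgn \<alpha> * \<gamma> = - (sgn \<delta> * \<beta>)"
proof -
  have a: "\<alpha> = 3 \<or> \<alpha> = -3" and d: "\<delta> = 3 \<or> \<delta> = -3" and b: "\<beta> = 1 \<or> \<beta> = -1"
    and g: "\<gamma> = 1 \<or> \<gamma> = -1" using assms(1-4) by linarith+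
  have s1: "\<not> (\<bar>\<alpha> + \<beta>\<bar> = 4 \<and> \<bar>\<gamma> + \<delta>\<bar> = 4)" using assms(5)[of 1] by simp
  have s2: "\<not> (\<bar>\<alpha> - \<beta>\<bar> = 4 \<and> \<bar>\<gamma> - \<delta>\<bar> = 4)" using assms(5)[of "-1"] by simp
  from a d b g s1 s2 show ?thesis by (elim disjE) simp_all
qed


lemma sum_expand:
  fixes a b :: "'n::finite \<Rightarrow> int"
  shows "(\<Sum>m\<in>UNIV. (a m - (if i = m then 2 else 0)) * (b m - (if j = m then 2 else 0)))
    = (\<Sum>m\<in>UNIV. a m * b m) - 2 * a j - 2 * b i + (if i = j then 4 else 0)"
proof -
  have e: "(a m - (if i = m then 2 else 0)) * (b m - (if j = m then 2 else 0))
     = a m * b m - (if m = j then 2 * a m else 0) - (if m = i then 2 * b m else 0)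
       + (if m = i then (if i = j then 4 else 0) else 0)" for m
    by (auto simp: algebra_simps)
  show ?thesis unfolding e by (simp add: sum.distrib sum_subtractf)
qed

theorem proposition1:
  fixes C :: "('p::prime_card mod_ring ^ 'n) set"
  assumes "CARD('p) = 7"
    and "CARD('n) = 20"
    and "is_nkd_code 20 10 9 C"
    and "self_dual C"
    and "lattice_iso (constructionA C) D_plus_lattice"
  shows "\<exists>H :: int ^ 'n ^ 'n. skew_hadamard_matrix H \<and>
           C = vec.span {row i (mat_mod (H + mat 2) :: 'p mod_ring ^ 'n ^ 'n) | i. True}"
proof -
  have p7: "real CARD('p) = 7" using assms(1) by simp
  have seven0: "(7 :: 'p mod_ring) = 0"
  proof -
    have "(of_nat CARD('p) :: 'p mod_ring) = 0" by (rule of_nat_card_eq_0)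
    then show ?thesis using assms(1) by simp
  qed
  have subC: "vec.subspace C" using assms(3) unfolding is_nkd_code_def by blast
  have mw: "min_weight C = 9" using assms(3) unfolding is_nkd_code_def by blast
  have wt: "hamming_weight c \<ge> 9" if "c \<in> C" "c \<noteq> 0" for c
  proof -
    have "finite (hamming_weight ` (C - {0}))" by simp
    then have "Min (hamming_weight ` (C - {0})) \<le> hamming_weight c"
      using that by (intro Min_le) auto
    then show ?thesis using mw unfolding min_weight_def by simp
  qed
  obtain A where orth: "orthogonal_matrix A" and DA: "D_plus_lattice = (\<lambda>x. x v* A) ` constructionA C"
    using assms(5) unfolding lattice_iso_def by blast
  define e where "e k = (\<chi> j. if j = k then sqrt 7 else (0::real))" for k :: 'n
  define f where "f k = e k v* A" for k
  have key: "inner ((\<chi> i. (1 / real CARD('p)) * real_of_int (x $ i) * sqrt (real CARD('p))) v* A) (f r)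
      = real_of_int (x $ r)" for x :: "int^'n" and r
  proof -
    have "inner ((\<chi> i. (1 / real CARD('p)) * real_of_int (x $ i) * sqrt (real CARD('p))) v* A) (f r)
      = inner (\<chi> i. (1 / real CARD('p)) * real_of_int (x $ i) * sqrt (real CARD('p))) (e r)"
      unfolding f_def by (rule orth_inner[OF orth])
    also have "\<dots> = (1 / 7) * real_of_int (x $ r) * sqrt 7 * sqrt 7"
      unfolding e_def inner_vec_def inner_real_def vec_lambda_beta
      by (subst sum_delta_mult) (simp add: p7)
    also have "\<dots> = real_of_int (x $ r)" by simp
    finally show ?thesis .
  qed
  have liftD: "\<exists>y\<in>D_plus_lattice. \<forall>r. inner y (f r) = real_of_int (x$r)"
    if "(\<chi> i. (of_int (x$i)::'p mod_ring)) \<in> C" for x :: "int^'n"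
  proof -
    have "(\<chi> i. (1 / real CARD('p)) * real_of_int (x $ i) * sqrt (real CARD('p))) \<in> constructionA C"
      unfolding constructionA_def using that by blast
    then show ?thesis unfolding DA using key by blast
  qed
  have liftC: "\<exists>x::int^'n. (\<chi> i. (of_int (x$i)::'p mod_ring)) \<in> C \<and> (\<forall>r. inner y (f r) = real_of_int (x$r))"
    if "y \<in> D_plus_lattice" for y
  proof -
    from that obtain z where z: "z \<in> constructionA C" and yz: "y = z v* A" unfolding DA by blast
    from z obtain x :: "int^'n" where zx: "z = (\<chi> i. (1 / real CARD('p)) * real_of_int (x $ i) * sqrt (real CARD('p)))"
      and xC: "(\<chi> i. (of_int (x$i)::'p mod_ring)) \<in> C"
      unfolding constructionA_def by blast
    show ?thesis using xC key yz zx by blast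
  qed
  have fD: "f k \<in> D_plus_lattice" for k
  proof -
    define x :: "int^'n" where "x = (\<chi> i. if i = k then 7 else 0)"
    have "(\<chi> i. (of_int (x$i)::'p mod_ring)) = 0"
      unfolding x_def by (simp add: vec_eq_iff seven0)
    then have xC: "(\<chi> i. (of_int (x$i)::'p mod_ring)) \<in> C" using vec.subspace_0[OF subC] by simp
    have ek: "(\<chi> i. (1 / real CARD('p)) * real_of_int (x $ i) * sqrt (real CARD('p))) = e k"
      unfolding x_def e_def p7 by (simp add: vec_eq_iff)
    have "e k \<in> constructionA C"
      unfolding constructionA_def
      by (rule CollectI, rule exI[of _ x]) (use ek xC in simp)
    then show ?thesis unfolding DA f_def by blast
  qed
  have ff: "inner (f k) (f l) = (if k = l then 7 else 0)" for k l
  proof -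
    have "inner (f k) (f l) = inner (e k) (e l)" unfolding f_def by (rule orth_inner[OF orth])
    also have "\<dots> = (if k = l then 7 else 0)"
      unfolding e_def inner_vec_def inner_real_def vec_lambda_beta
      by (subst sum_delta_mult) simp
    finally show ?thesis .
  qed
  have intD: "(\<chi> i. real_of_int (u $ i)) \<in> D_plus_lattice" if "even (\<Sum>i\<in>UNIV. u $ i)" for u :: "int^'n"
  proof -
    have "(\<chi> i. real_of_int (u $ i)) \<in> D_lattice" unfolding D_lattice_def using that by blast
    then have "(\<chi> i. real_of_int (u $ i)) + real_of_int 0 *\<^sub>R (\<chi> i. 1 / 2) \<in> D_plus_lattice"
      unfolding D_plus_lattice_def by blast
    then show ?thesis by simp
  qed
  define Q where "Q k p \<longleftrightarrow> f k = (\<chi> i. real_of_int (fst p $ i)) + real_of_int (snd p) *\<^sub>R (\<chi> i. 1 / 2)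
      \<and> even (\<Sum>i\<in>UNIV. fst p $ i)" for k and p :: "(int^'n) \<times> int"
  have "\<forall>k. \<exists>p. Q k p"
  proof
    fix k
    obtain v m where vm: "f k = v + real_of_int m *\<^sub>R (\<chi> i. 1 / 2)" "v \<in> D_lattice"
      using fD[of k] unfolding D_plus_lattice_def by blast
    obtain a :: "int^'n" where a: "v = (\<chi> i. real_of_int (a $ i))" "even (\<Sum>i\<in>UNIV. a $ i)"
      using vm(2) unfolding D_lattice_def by blast
    show "\<exists>p. Q k p" unfolding Q_def by (rule exI[of _ "(a, m)"]) (simp add: vm(1) a)
  qed
  then have "\<exists>P. \<forall>k. Q k (P k)" by (rule choice)
  then obtain P where P0: "\<forall>k. Q k (P k)" by blast
  have P: "\<And>k. f k = (\<chi> i. real_of_int (fst (P k) $ i)) + real_of_int (snd (P k)) *\<^sub>R (\<chi> i. 1 / 2)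
      \<and> even (\<Sum>i\<in>UNIV. fst (P k) $ i)" using P0 unfolding Q_def by blast
  define W where "W k = fst (P k)" for k
  define M where "M k = snd (P k)" for k
  have WM: "\<And>k. f k = (\<chi> i. real_of_int (W k $ i)) + real_of_int (M k) *\<^sub>R (\<chi> i. 1 / 2)"
    and Weven: "\<And>k. even (\<Sum>i\<in>UNIV. W k $ i)" using P unfolding W_def M_def by blast+
  define B where "B k j = 2 * W k $ j + M k" for k j
  have fB: "2 * f k $ j = real_of_int (B k j)" for k j
    unfolding B_def WM by simp
  have innerB: "inner y (f k) = (\<Sum>j\<in>UNIV. y $ j * real_of_int (B k j)) / 2" for y k
    unfolding inner_vec_def inner_real_def fB[symmetric] by (simp add: sum_divide_distrib)
  have Borth: "(\<Sum>j\<in>UNIV. B k j * B l j) = (if k = l then 28 else 0)" for k l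
  proof -
    have r: "real_of_int (\<Sum>j\<in>UNIV. B k j * B l j) = 4 * inner (f k) (f l)"
      unfolding inner_vec_def inner_real_def by (simp add: fB[symmetric] sum_distrib_left)
    have "real_of_int (\<Sum>j\<in>UNIV. B k j * B l j) = real_of_int (if k = l then 28 else 0)"
      unfolding r ff by simp
    then show ?thesis by (simp only: of_int_eq_iff)
  qed

  have Modd: "odd (M k)" for k
  proof
    assume "even (M k)"
    then obtain t where t: "M k = 2*t" by blast
    define v where "v j = W k $ j + t" for j
    have Bv: "B k j = 2 * v j" for j unfolding B_def v_def t by simp
    have "(\<Sum>j\<in>UNIV. B k j * B k j) = 28" using Borth[of k k] by simp
    moreover have "(\<Sum>j\<in>UNIV. B k j * B k j) = 4 * (\<Sum>j\<in>UNIV. v j * v j)"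
      unfolding Bv by (simp add: sum_distrib_left algebra_simps)
    ultimately have v7: "(\<Sum>j\<in>UNIV. v j * v j) = 7" by simp
    have "(\<Sum>j\<in>UNIV. v j) = (\<Sum>j\<in>UNIV. W k $ j) + 20 * t"
      unfolding v_def using assms(2) by (simp add: sum.distrib)
    then have ev: "even (\<Sum>j\<in>UNIV. v j)" using Weven[of k] by simp
    have "even (\<Sum>j\<in>UNIV. v j * v j - v j)" by (rule dvd_sum) simp
    then have "even ((\<Sum>j\<in>UNIV. v j * v j) - (\<Sum>j\<in>UNIV. v j))" by (simp add: sum_subtractf)
    then show False using v7 ev by simp
  qed
  have Bodd: "odd (B k j)" for k j unfolding B_def using Modd[of k] by simp
  have BorthR: "(\<Sum>j\<in>UNIV. real_of_int (B k j) * real_of_int (B l j)) = (if k = l then 28 else 0)" for k l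
  proof -
    have "real_of_int (\<Sum>j\<in>UNIV. B k j * B l j) = real_of_int (if k = l then 28 else 0)"
      by (simp only: Borth)
    then show ?thesis by (cases "k = l") simp_all
  qed
  have BcR: "(\<Sum>k\<in>UNIV. real_of_int (B k a) * real_of_int (B k b)) = (if a = b then 28 else 0)" for a b
    by (rule transpose_orth) (rule BorthR)
  have Bc: "(\<Sum>k\<in>UNIV. B k a * B k b) = (if a = b then 28 else 0)" for a b
  proof -
    have "real_of_int (\<Sum>k\<in>UNIV. B k a * B k b) = real_of_int (if a = b then 28 else 0)"
      using BcR[of a b] by (cases "a = b") simp_all
    then show ?thesis by (simp only: of_int_eq_iff)
  qed
  have rowex: "\<exists>a. \<bar>B k a\<bar> = 3 \<and> (\<forall>j. j \<noteq> a \<longrightarrow> \<bar>B k j\<bar> = 1)" for k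
    by (rule odd_sq_lemma[OF Bodd _ assms(2)]) (use Borth[of k k] in \<open>simp add: power2_eq_square\<close>)
  have colex: "\<exists>r. \<bar>B r a\<bar> = 3 \<and> (\<forall>i. i \<noteq> r \<longrightarrow> \<bar>B i a\<bar> = 1)" for a
    by (rule odd_sq_lemma[of "\<lambda>r. B r a", OF Bodd _ assms(2)]) (use Bc[of a a] in \<open>simp add: power2_eq_square\<close>)
  define \<sigma> where "\<sigma> k = (SOME a. \<bar>B k a\<bar> = 3 \<and> (\<forall>j. j \<noteq> a \<longrightarrow> \<bar>B k j\<bar> = 1))" for k
  have \<sigma>3: "\<bar>B k (\<sigma> k)\<bar> = 3" and \<sigma>1: "\<And>j. j \<noteq> \<sigma> k \<Longrightarrow> \<bar>B k j\<bar> = 1" for k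
    using someI_ex[OF rowex[of k]] unfolding \<sigma>_def by blast+
  have col\<sigma>: "\<bar>B i (\<sigma> k)\<bar> = 1" if "i \<noteq> k" for i k
  proof -
    obtain r where r: "\<bar>B r (\<sigma> k)\<bar> = 3" "\<And>i. i \<noteq> r \<Longrightarrow> \<bar>B i (\<sigma> k)\<bar> = 1"
      using colex[of "\<sigma> k"] by blast
    have "r = k" using r(2)[of k] \<sigma>3[of k] by (cases "r = k") auto
    then show ?thesis using r(2) that by blast
  qed
  have \<sigma>inj: "\<sigma> k \<noteq> \<sigma> i" if "k \<noteq> i" for k i
    using col\<sigma>[OF that[symmetric]] \<sigma>3[of i] by auto
  have \<sigma>surj: "\<exists>k. \<sigma> k = a" for a
  proof -
    obtain r where r: "\<bar>B r a\<bar> = 3" using colex[of a] by blast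
    then have "\<sigma> r = a" using \<sigma>1[of a r] by (cases "a = \<sigma> r") auto
    then show ?thesis by blast
  qed
  define \<epsilon> where "\<epsilon> k = sgn (B k (\<sigma> k))" for k
  have B\<sigma>: "B k (\<sigma> k) = 3 * \<epsilon> k" for k
    using \<sigma>3[of k] unfolding \<epsilon>_def by (cases "B k (\<sigma> k) \<ge> 0") auto
  have \<epsilon>2: "\<epsilon> k * \<epsilon> k = 1" for k
    using \<sigma>3[of k] unfolding \<epsilon>_def by (cases "B k (\<sigma> k) \<ge> 0") auto
  define N :: "int^'n^'n" where "N = (\<chi> k i. \<epsilon> k * B i (\<sigma> k))"
  have Ndiag: "N $ k $ k = 3" for k
    unfolding N_def using B\<sigma>[of k] \<epsilon>2[of k] by (simp add: algebra_simps)
  have Noff: "N $ k $ i = 1 \<or> N $ k $ i = -1" if "k \<noteq> i" for k i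
  proof -
    have "\<epsilon> k = 1 \<or> \<epsilon> k = -1" using \<sigma>3[of k] unfolding \<epsilon>_def
      by (cases "B k (\<sigma> k) \<ge> 0") auto
    moreover have "B i (\<sigma> k) = 1 \<or> B i (\<sigma> k) = -1" using col\<sigma>[of i k] that by fastforce
    ultimately show ?thesis unfolding N_def by auto
  qed

  have two0: "(of_int 2 :: 'p mod_ring) \<noteq> 0"
  proof
    assume h: "(of_int 2 :: 'p mod_ring) = 0"
    have t2: "to_int_mod_ring (of_int_mod_ring 2 :: 'p mod_ring) = 2"
      by (rule to_int_mod_ring_of_int_mod_ring) (use assms(1) in auto)
    have t0: "to_int_mod_ring (of_int_mod_ring 0 :: 'p mod_ring) = 0"
      by (rule to_int_mod_ring_of_int_mod_ring) (use assms(1) in auto)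
    have eq: "(of_int_mod_ring 2 :: 'p mod_ring) = of_int_mod_ring 0"
      using h by (simp add: of_int_of_int_mod_ring[symmetric])
    have "to_int_mod_ring (of_int_mod_ring 2 :: 'p mod_ring) = to_int_mod_ring (of_int_mod_ring 0 :: 'p mod_ring)"
      by (simp only: eq)
    then show False unfolding t2 t0 by simp
  qed
  have innerU: "inner (\<chi> i. real_of_int (u $ i)) (f r) = real_of_int (\<Sum>j\<in>UNIV. u $ j * B r j) / 2"
    for u :: "int^'n" and r
    unfolding innerB by simp
  have wcond: "\<not> (\<bar>B k a + s * B k b\<bar> = 4 \<and> \<bar>B i a + s * B i b\<bar> = 4)"
    if ki: "k \<noteq> i" and ab: "a \<noteq> b" and s: "s = 1 \<or> s = -1" for k i a b s
  proof
    assume h: "\<bar>B k a + s * B k b\<bar> = 4 \<and> \<bar>B i a + s * B i b\<bar> = 4"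
    define u :: "int^'n" where "u = (\<chi> j. (if j = a then 1 else 0) + (if j = b then s else 0))"
    have "(\<Sum>j\<in>UNIV. u $ j) = 1 + s" unfolding u_def by (simp add: sum.distrib)
    then have "even (\<Sum>j\<in>UNIV. u $ j)" using s by auto
    then have uD: "(\<chi> i. real_of_int (u $ i)) \<in> D_plus_lattice" by (rule intD)
    obtain x where xC: "(\<chi> i. (of_int (x$i)::'p mod_ring)) \<in> C"
      and xr: "\<And>r. inner (\<chi> i. real_of_int (u $ i)) (f r) = real_of_int (x $ r)"
      using liftC[OF uD] by blast
    have usum: "(\<Sum>j\<in>UNIV. u $ j * B r j) = B r a + s * B r b" for r
    proof -
      have "(\<Sum>j\<in>UNIV. u $ j * B r j)
          = (\<Sum>j\<in>UNIV. (if j = a then B r j else 0) + (if j = b then s * B r j else 0))"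
        unfolding u_def by (rule sum.cong) (auto simp: algebra_simps)
      then show ?thesis by (simp add: sum.distrib)
    qed
    have x2: "2 * x $ r = B r a + s * B r b" for r
    proof -
      have "real_of_int (x $ r) = real_of_int (B r a + s * B r b) / 2"
        using xr[of r] innerU[of u r] usum[of r] by simp
      then have "real_of_int (2 * x $ r) = real_of_int (B r a + s * B r b)" by simp
      then show ?thesis by (simp only: of_int_eq_iff)
    qed
    have ss: "s * s = 1" using s by auto
    have "4 * (\<Sum>r\<in>UNIV. x $ r * x $ r) = (\<Sum>r\<in>UNIV. (2 * x $ r) * (2 * x $ r))"
      by (simp add: sum_distrib_left algebra_simps)
    also have "\<dots> = (\<Sum>r\<in>UNIV. B r a * B r a + 2 * s * (B r a * B r b) + (s * s) * (B r b * B r b))"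
      unfolding x2 by (rule sum.cong) (auto simp: algebra_simps)
    also have "\<dots> = 56" using Bc[of a a] Bc[of a b] Bc[of b b] ab ss
      by (simp add: sum.distrib sum_distrib_left[symmetric])
    finally have xsq: "(\<Sum>r\<in>UNIV. x $ r * x $ r) = 14" by simp
    have "\<bar>2 * x $ k\<bar> = 4" "\<bar>2 * x $ i\<bar> = 4" using h x2[of k] x2[of i] by simp_all
    then have xk2: "x $ k = 2 \<or> x $ k = -2" and xi2: "x $ i = 2 \<or> x $ i = -2" by linarith+
    have xk: "x $ k * x $ k = 4" using xk2 by auto
    have xi: "x $ i * x $ i = 4" using xi2 by auto
    define S where "S = {r. x $ r \<noteq> 0}"
    have termle: "(if x $ r \<noteq> 0 then 1 else 0) + (if r = k then 3 else 0) + (if r = i then 3 else 0)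
        \<le> x $ r * x $ r" for r
    proof (cases "r = k \<or> r = i")
      case True then show ?thesis using xk xi ki by auto
    next
      case False
      have "x $ r \<noteq> 0 \<Longrightarrow> x $ r * x $ r > 0" by (simp add: zero_less_mult_iff linorder_neq_iff) blast
      then show ?thesis using False by auto
    qed
    have "(\<Sum>r\<in>UNIV. (if x $ r \<noteq> 0 then 1 else 0) + (if r = k then 3 else 0) + (if r = i then 3 else (0::int)))
        \<le> (\<Sum>r\<in>UNIV. x $ r * x $ r)"
      by (rule sum_mono) (rule termle)
    moreover have "(\<Sum>r\<in>UNIV. (if x $ r \<noteq> 0 then 1 else 0) + (if r = k then 3 else 0) + (if r = i then 3 else (0::int)))
        = int (card S) + 6"
      unfolding S_def by (simp add: sum.distrib sum.If_cases)
    ultimately have cS: "card S \<le> 8" using xsq by simp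
    define c where "c = (\<chi> i. (of_int (x$i)::'p mod_ring))"
    have "{r. c $ r \<noteq> 0} \<subseteq> S" unfolding c_def S_def by auto
    then have "card {r. c $ r \<noteq> 0} \<le> card S" by (rule card_mono[rotated]) simp
    then have "hamming_weight c \<le> 8" unfolding hamming_weight_def using cS by linarith
    moreover have "c \<noteq> 0"
    proof
      assume "c = 0"
      then have "c $ k = 0" by simp
      then have "(of_int (x $ k) :: 'p mod_ring) = 0" unfolding c_def by simp
      then show False using two0 xk2 by auto
    qed
    ultimately show False using wt[of c] xC unfolding c_def by auto
  qed
  have Nskew: "N $ k $ i = - N $ i $ k" if "k \<noteq> i" for k i
  proof -
    have "sgn (B k (\<sigma> k)) * B i (\<sigma> k) = - (sgn (B i (\<sigma> i)) * B k (\<sigma> i))"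
    proof (rule skew_arith)
      show "\<bar>B k (\<sigma> k)\<bar> = 3" "\<bar>B i (\<sigma> i)\<bar> = 3" by (rule \<sigma>3)+
      show "\<bar>B k (\<sigma> i)\<bar> = 1" using col\<sigma>[of k i] that by simp
      show "\<bar>B i (\<sigma> k)\<bar> = 1" using col\<sigma>[of i k] that by simp
      show "\<not> (\<bar>B k (\<sigma> k) + s * B k (\<sigma> i)\<bar> = 4 \<and> \<bar>B i (\<sigma> k) + s * B i (\<sigma> i)\<bar> = 4)"
        if "s = 1 \<or> s = -1" for s
        by (rule wcond[OF \<open>k \<noteq> i\<close> \<sigma>inj[OF \<open>k \<noteq> i\<close>] that])
    qed
    then show ?thesis unfolding N_def \<epsilon>_def by simp
  qed

  define H :: "int^'n^'n" where "H = N - mat 2"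
  have HN: "H + mat 2 = N" unfolding H_def by simp
  have Hent: "H $ i $ j = N $ i $ j - (if i = j then 2 else 0)" for i j
    unfolding H_def mat_def by simp
  have NN: "(\<Sum>m\<in>UNIV. N $ i $ m * N $ j $ m) = (if i = j then 28 else 0)" for i j
  proof -
    have "(\<Sum>m\<in>UNIV. N $ i $ m * N $ j $ m) = \<epsilon> i * \<epsilon> j * (\<Sum>m\<in>UNIV. B m (\<sigma> i) * B m (\<sigma> j))"
      unfolding N_def by (simp add: sum_distrib_left algebra_simps)
    also have "\<dots> = (if i = j then 28 else 0)"
      unfolding Bc using \<sigma>inj[of i j] \<epsilon>2[of i] by auto
    finally show ?thesis .
  qed
  have skewH: "skew_hadamard_matrix H"
    unfolding skew_hadamard_matrix_def hadamard_matrix_def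
  proof (intro conjI allI)
    fix i j
    show "H $ i $ j = 1 \<or> H $ i $ j = - 1"
      using Noff[of i j] Ndiag[of i] unfolding Hent by (cases "i = j") auto
  next
    have "(H ** transpose H) $ i $ j = mat (int CARD('n)) $ i $ j" for i j
    proof -
      have "(H ** transpose H) $ i $ j = (\<Sum>m\<in>UNIV. (N $ i $ m - (if i = m then 2 else 0)) * (N $ j $ m - (if j = m then 2 else 0)))"
        unfolding matrix_matrix_mult_def transpose_def Hent by simp
      also have "\<dots> = (\<Sum>m\<in>UNIV. N $ i $ m * N $ j $ m) - 2 * N $ i $ j - 2 * N $ j $ i + (if i = j then 4 else 0)"
        by (rule sum_expand)
      also have "\<dots> = mat (int CARD('n)) $ i $ j"
        unfolding NN mat_def using assms(2) Ndiag[of i] Nskew[of i j] by auto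
      finally show ?thesis .
    qed
    then show "H ** transpose H = mat (int CARD('n))" by (simp add: vec_eq_iff)
  next
    have "(H + transpose H) $ i $ j = mat 2 $ i $ j" for i j
    proof (cases "i = j")
      case True then show ?thesis by (simp add: transpose_def mat_def Hent Ndiag)
    next
      case False then show ?thesis using Nskew[OF False] by (simp add: transpose_def mat_def Hent)
    qed
    then show "H + transpose H = mat 2" by (simp add: vec_eq_iff)
  qed
  define colv where "colv a = (\<chi> r. (of_int (B r a) :: 'p mod_ring))" for a
  define R where "R = {row i (mat_mod (H + mat 2) :: 'p mod_ring ^ 'n ^ 'n) | i. True}"
  have rowN: "row k (mat_mod (H + mat 2) :: 'p mod_ring ^ 'n ^ 'n) = of_int (\<epsilon> k) *s colv (\<sigma> k)" for k
    unfolding HN row_def mat_mod_def colv_def N_def by (simp add: vec_eq_iff)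
  have colvC: "colv a \<in> C" for a
  proof -
    define u :: "int^'n" where "u = (\<chi> j. if j = a then 2 else 0)"
    have "(\<Sum>j\<in>UNIV. u $ j) = 2" unfolding u_def by simp
    then have "even (\<Sum>j\<in>UNIV. u $ j)" by simp
    then have uD: "(\<chi> i. real_of_int (u $ i)) \<in> D_plus_lattice" by (rule intD)
    obtain x where xC: "(\<chi> i. (of_int (x$i)::'p mod_ring)) \<in> C"
      and xr: "\<And>r. inner (\<chi> i. real_of_int (u $ i)) (f r) = real_of_int (x $ r)"
      using liftC[OF uD] by blast
    have usum: "(\<Sum>j\<in>UNIV. u $ j * B r j) = 2 * B r a" for r
    proof -
      have "(\<Sum>j\<in>UNIV. u $ j * B r j) = (\<Sum>j\<in>UNIV. if j = a then 2 * B r j else 0)"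
        unfolding u_def by (rule sum.cong) auto
      then show ?thesis by simp
    qed
    have "x $ r = B r a" for r
    proof -
      have "real_of_int (x $ r) = real_of_int (B r a)"
        using xr[of r] innerU[of u r] usum[of r] by simp
      then show ?thesis by (simp only: of_int_eq_iff)
    qed
    then have "(\<chi> i. (of_int (x$i)::'p mod_ring)) = colv a" unfolding colv_def by simp
    then show ?thesis using xC by simp
  qed
  have colvspan: "colv a \<in> vec.span R" for a
  proof -
    obtain k where k: "\<sigma> k = a" using \<sigma>surj by blast
    have ee: "of_int (\<epsilon> k) * of_int (\<epsilon> k) = (1::'p mod_ring)"
    proof -
      have "of_int (\<epsilon> k * \<epsilon> k) = (1::'p mod_ring)" using \<epsilon>2[of k] by simp
      then show ?thesis by simp
    qed
    have "colv a = of_int (\<epsilon> k) *s row k (mat_mod (H + mat 2) :: 'p mod_ring ^ 'n ^ 'n)"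
      unfolding rowN k[symmetric] vector_smult_assoc ee by simp
    moreover have "row k (mat_mod (H + mat 2) :: 'p mod_ring ^ 'n ^ 'n) \<in> vec.span R"
      unfolding R_def by (rule vec.span_base) blast
    ultimately show ?thesis by (simp add: vec.span_scale)
  qed
  have CR: "C = vec.span R"
  proof
    show "vec.span R \<subseteq> C"
    proof (rule vec.span_minimal[OF _ subC])
      show "R \<subseteq> C" unfolding R_def using rowN colvC vec.subspace_scale[OF subC] by auto
    qed
  next
    show "C \<subseteq> vec.span R"
    proof
      fix c assume cC: "c \<in> C"
      define x :: "int^'n" where "x = (\<chi> i. to_int_mod_ring (c $ i))"
      have cx: "(\<chi> i. (of_int (x$i)::'p mod_ring)) = c"
        unfolding x_def by (simp add: vec_eq_iff of_int_of_int_mod_ring)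
      obtain y where yD: "y \<in> D_plus_lattice" and yr: "\<And>r. inner y (f r) = real_of_int (x$r)"
        using liftD[of x] cC cx by auto
      obtain w :: "int^'n" and m :: int where yw: "y = (\<chi> i. real_of_int (w $ i)) + real_of_int m *\<^sub>R (\<chi> i. 1 / 2)"
        using yD unfolding D_plus_lattice_def D_lattice_def by blast
      have x4: "4 * x $ r = (\<Sum>j\<in>UNIV. (2 * w $ j + m) * B r j)" for r
      proof -
        have "real_of_int (x $ r) = (\<Sum>j\<in>UNIV. y $ j * real_of_int (B r j)) / 2"
          using yr[of r] innerB[of y r] by simp
        also have "\<dots> = ((\<Sum>j\<in>UNIV. real_of_int ((2 * w $ j + m) * B r j)) / 2) / 2"
        proof -
          have "(\<Sum>j\<in>UNIV. y $ j * real_of_int (B r j)) = (\<Sum>j\<in>UNIV. real_of_int ((2 * w $ j + m) * B r j)) / 2"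
            unfolding yw sum_divide_distrib by (rule sum.cong) (simp_all add: algebra_simps)
          then show ?thesis by simp
        qed
        finally have "real_of_int (4 * x $ r) = real_of_int (\<Sum>j\<in>UNIV. (2 * w $ j + m) * B r j)"
          by simp
        then show ?thesis by (simp only: of_int_eq_iff)
      qed
      have cr: "c $ r = (\<Sum>j\<in>UNIV. of_int (2 * (2 * w $ j + m)) * of_int (B r j))" for r
      proof -
        have "c $ r = of_int (x $ r)" using cx by (metis vec_lambda_beta)
        also have "\<dots> = of_int (x $ r) + 7 * of_int (x $ r)" using seven0 by simp
        also have "\<dots> = of_int (2 * (4 * x $ r))" by simp
        also have "\<dots> = (\<Sum>j\<in>UNIV. of_int (2 * (2 * w $ j + m)) * of_int (B r j))"
          unfolding x4 by (simp add: sum_distrib_left algebra_simps)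
        finally show ?thesis .
      qed
      have "c = (\<Sum>j\<in>UNIV. of_int (2 * (2 * w $ j + m)) *s colv j)"
      proof -
        have "(\<Sum>j\<in>UNIV. of_int (2 * (2 * w $ j + m)) *s colv j) $ r
            = (\<Sum>j\<in>UNIV. of_int (2 * (2 * w $ j + m)) * of_int (B r j))" for r
          unfolding sum_component vector_scalar_mult_def colv_def vec_lambda_beta by (rule refl)
        then show ?thesis unfolding vec_eq_iff using cr by simp
      qed
      also have "\<dots> \<in> vec.span R"
        by (rule vec.span_sum) (intro vec.span_scale colvspan)
      finally show "c \<in> vec.span R" .
    qed
  qed
  show ?thesis
    by (rule exI[of _ H], rule conjI[OF skewH]) (use CR in \<open>simp only: R_def\<close>)
qed

end
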